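(* Let $V$ be an $m$-dimensional vector space with volume form $\omega$, and let $(F,G,H)$ be a generic triple of decorated flags. For nonnegative integers $a,b,c,s$ with $a+b+c=m-s$ and $a,b,c>0$, $$\Delta^s_{a,b,c}\,\Delta^{s+1}_{a,b-1,c}=\Delta^s_{a+1,b-1,c}\,\Delta^{s+1}_{a-1,b,c}+\Delta^s_{a,b-1,c+1}\,\Delta^{s+1}_{a,b,c-1}.$$
   Context: A decorated flag in $(V,\omega)$ is a flag $F_1\subset\cdots\subset F_{m-1}$ ($\dim F_i=i$) with nonzero $f_{(i)}\in\wedge^iF_i$ for $1\le i\le m-1$; put $f_{(0)}=1$ and let $f_{(m)}\in\wedge^mV$ with $\langle f_{(m)},\omega\rangle=1$; similarly $G=(G_\bullet,g_{(i)})$, $H=(H_\bullet,h_{(i)})$. For generic $(F,G)$ there is a basis $f_1,\dots,f_m$ of $V$ with $f_k\in F_k\cap G_{m+1-k}$ and $f_{(k)}=f_1\wedge\cdots\wedge f_k$ for all $k$; for generic $(G,H)$ there is a basis $h_1,\dots,h_m$ with $h_k\in G_{m+1-k}\cap H_k$ and $h_{(k)}=h_k\wedge h_{k-1}\wedge\cdots\wedge h_1$. Put $f_{s,(k)}=f_{s+1}\wedge\cdots\wedge f_{s+k}$ and $h_{(k),s}=h_{s+k}\wedge\cdots\wedge h_{s+1}$. For $a+b+c=m-s$, $f_{s,(a)}\wedge g_{(b)}\wedge h_{(c),s}\in\wedge^{m-s}G_{m-s}$ (with $G_m=V$, $g_{(m)}$ normalized by $\langle g_{(m)},\omega\rangle=1$),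 and $\Delta^s_{a,b,c}:=\langle f_{s,(a)}\wedge g_{(b)}\wedge h_{(c),s},\omega_s\rangle$, where $\omega_s$ is the volume form on $G_{m-s}$ with $\langle g_{(m-s)},\omega_s\rangle=\langle f_{(s)}\wedge g_{(m-s)},\omega\rangle\langle g_{(m-s)}\wedge h_{(s)},\omega\rangle$. For $s=0$, $\Delta^0_{a,b,c}=\Delta_{a,b,c}:=\langle f_{(a)}\wedge g_{(b)}\wedge h_{(c)},\omega\rangle$. *)

theory Defs
  imports "Jordan_Normal_Form.Determinant"
begin

text \<open>Model: V = k^m for a field k, vectors are coordinate functions nat => k
  supported on {..<m}.  A k-vector (element of the k-th exterior power of V) is
  represented by its Pluecker coordinates, a function on index sets I with
  card I = k.\<close>

definition vecs :: "nat \<Rightarrow> (nat \<Rightarrow> 'a::field) set" where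
  "vecs m = {v. \<forall>i\<ge>m. v i = 0}"

definition lcomb :: "(nat \<Rightarrow> 'a::field) \<Rightarrow> (nat \<Rightarrow> nat \<Rightarrow> 'a) \<Rightarrow> nat \<Rightarrow> (nat \<Rightarrow> 'a)" where
  "lcomb c u d = (\<lambda>i. \<Sum>j<d. c j * u j i)"

definition lin_indep :: "(nat \<Rightarrow> nat \<Rightarrow> 'a::field) \<Rightarrow> nat \<Rightarrow> bool" where
  "lin_indep u d \<longleftrightarrow> (\<forall>c. lcomb c u d = (\<lambda>_. 0) \<longrightarrow> (\<forall>j<d. c j = 0))"

definition subspace_dim :: "nat \<Rightarrow> (nat \<Rightarrow> 'a::field) set \<Rightarrow> nat \<Rightarrow> bool" where
  "subspace_dim m W d \<longleftrightarrow> (\<exists>u. (\<forall>j<d. u j \<in> vecs m) \<and> lin_indep u d \<and> W = {lcomb c u d | c. True})"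

definition wedge :: "nat \<Rightarrow> (nat \<Rightarrow> nat \<Rightarrow> 'a::field) \<Rightarrow> nat \<Rightarrow> nat set \<Rightarrow> 'a" where
  "wedge m u k I = (if I \<subseteq> {..<m} \<and> card I = k
      then det (mat k k (\<lambda>(r, j). u j (sorted_list_of_set I ! r))) else 0)"

definition fapp :: "nat \<Rightarrow> (nat \<Rightarrow> 'b) \<Rightarrow> (nat \<Rightarrow> 'b) \<Rightarrow> nat \<Rightarrow> 'b" where
  "fapp a u v = (\<lambda>j. if j < a then u j else v (j - a))"

text \<open>The volume form omega on k^m is om times the standard determinant form;
  pairing of the top wedge of an m-frame with omega.\<close>
definition pair_top :: "nat \<Rightarrow> 'a::field \<Rightarrow> (nat \<Rightarrow> nat \<Rightarrow> 'a) \<Rightarrow> 'a" where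
  "pair_top m om u = om * wedge m u m {..<m}"

text \<open>Decorated flag: subspaces Fs 1 \<subseteq> ... \<subseteq> Fs (m-1), dim Fs i = i, with
  decorations f_(i) = wedge of the frame fr i (i vectors of Fs i), nonzero;
  f_(m) = wedge of the frame fr m with <f_(m), omega> = 1.  (Every element of the
  line \<wedge>^i F_i is such a wedge.)\<close>
definition decorated_flag :: "nat \<Rightarrow> 'a::field \<Rightarrow> (nat \<Rightarrow> (nat \<Rightarrow> 'a) set) \<Rightarrow> (nat \<Rightarrow> nat \<Rightarrow> nat \<Rightarrow> 'a) \<Rightarrow> bool" where
  "decorated_flag m om Fs fr \<longleftrightarrow>
     (\<forall>i\<in>{1..<m}. subspace_dim m (Fs i) i \<and> (\<forall>j<i. fr i j \<in> Fs i) \<and> wedge m (fr i) i \<noteq> (\<lambda>_. 0))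
   \<and> (\<forall>i. 1 \<le> i \<and> i + 1 < m \<longrightarrow> Fs i \<subseteq> Fs (i + 1))
   \<and> (\<forall>j<m. fr m j \<in> vecs m) \<and> pair_top m om (fr m) = 1"

text \<open>Pairwise genericity (transversality) of two flags\<close>
definition transverse :: "nat \<Rightarrow> (nat \<Rightarrow> (nat \<Rightarrow> 'a::field) set) \<Rightarrow> (nat \<Rightarrow> (nat \<Rightarrow> 'a) set) \<Rightarrow> bool" where
  "transverse m Fs Gs \<longleftrightarrow> (\<forall>i\<in>{1..<m}. Fs i \<inter> Gs (m - i) = {\<lambda>_. 0})"

text \<open>The frame f_{s+1}, ..., f_{s+a}, (frame of g_(b)), h_{s+c}, ..., h_{s+1}\<close>
definition Xframe :: "(nat \<Rightarrow> nat \<Rightarrow> nat \<Rightarrow> 'a) \<Rightarrow> (nat \<Rightarrow> nat \<Rightarrow> 'a) \<Rightarrow> (nat \<Rightarrow> nat \<Rightarrow> 'a)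
     \<Rightarrow> nat \<Rightarrow> nat \<Rightarrow> nat \<Rightarrow> nat \<Rightarrow> nat \<Rightarrow> nat \<Rightarrow> 'a" where
  "Xframe gfr fb hb s a b c =
     fapp a (\<lambda>j. fb (s + 1 + j)) (fapp b (gfr b) (\<lambda>j. hb (s + c - j)))"

text \<open>Delta^s_{a,b,c} = <X, omega_s> with X = f_{s,(a)} /\ g_(b) /\ h_{(c),s} in \<wedge>^{m-s} G_{m-s}.
  Since \<wedge>^{m-s} G_{m-s} is the line spanned by g_(m-s), X = r g_(m-s), and
  <X, omega_s> = r <g_(m-s), omega_s> = r <f_(s)/\g_(m-s),omega> <g_(m-s)/\h_(s),omega>.\<close>
definition Delta :: "nat \<Rightarrow> 'a::field \<Rightarrow> (nat \<Rightarrow> nat \<Rightarrow> nat \<Rightarrow> 'a) \<Rightarrow> (nat \<Rightarrow> nat \<Rightarrow> nat \<Rightarrow> 'a)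
     \<Rightarrow> (nat \<Rightarrow> nat \<Rightarrow> nat \<Rightarrow> 'a) \<Rightarrow> (nat \<Rightarrow> nat \<Rightarrow> 'a) \<Rightarrow> (nat \<Rightarrow> nat \<Rightarrow> 'a)
     \<Rightarrow> nat \<Rightarrow> nat \<Rightarrow> nat \<Rightarrow> nat \<Rightarrow> 'a" where
  "Delta m om ffr gfr hfr fb hb s a b c =
     (THE r. wedge m (Xframe gfr fb hb s a b c) (m - s) = (\<lambda>I. r * wedge m (gfr (m - s)) (m - s) I))
     * pair_top m om (fapp s (ffr s) (gfr (m - s)))
     * pair_top m om (fapp (m - s) (gfr (m - s)) (hfr s))"

end

theory Submission imports Defs begin

definition cd :: "nat \<Rightarrow> (nat \<Rightarrow> nat \<Rightarrow> 'a::comm_ring_1) \<Rightarrow> 'a" where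
  "cd n u = det (mat n n (\<lambda>(r,j). u j r))"

lemma cd_cong: "(\<And>j r. j < n \<Longrightarrow> r < n \<Longrightarrow> u j r = v j r) \<Longrightarrow> cd n u = cd n v"
  unfolding cd_def by (rule arg_cong[where f=det], rule eq_matI, auto)

lemma cd_col_expand:
  assumes k: "k < n"
  shows "\<exists>cof. \<forall>w. cd n (u(k:=w)) = (\<Sum>r<n. w r * cof r)"
proof -
  let ?A = "\<lambda>w. mat n n (\<lambda>(r,j). (u(k:=w)) j r)"
  have "cd n (u(k:=w)) = (\<Sum>r<n. w r * cofactor (?A (\<lambda>_. 0)) r k)" for w
  proof -
    have "cd n (u(k:=w)) = (\<Sum>r<n. ?A w $$ (r,k) * cofactor (?A w) r k)"
      unfolding cd_def by (rule laplace_expansion_column[OF _ k], auto)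
    also have "\<dots> = (\<Sum>r<n. w r * cofactor (?A (\<lambda>_. 0)) r k)"
    proof (rule sum.cong[OF refl])
      fix r assume r: "r \<in> {..<n}"
      have "mat_delete (?A w) r k = mat_delete (?A (\<lambda>_. 0)) r k"
        unfolding mat_delete_def by (rule eq_matI, auto)
      then show "?A w $$ (r,k) * cofactor (?A w) r k = w r * cofactor (?A (\<lambda>_. 0)) r k"
        using r k unfolding cofactor_def by auto
    qed
    finally show ?thesis .
  qed
  then show ?thesis by (intro exI[of _ "\<lambda>r. cofactor (?A (\<lambda>_. 0)) r k"] allI)
qed

lemma cd_linear:
  assumes k: "k < n" and S: "finite S"
  shows "cd n (u(k := (\<lambda>r. \<Sum>i\<in>S. c i * v i r))) = (\<Sum>i\<in>S. c i * cd n (u(k := v i)))"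
proof -
  obtain cof where cof: "\<And>w. cd n (u(k:=w)) = (\<Sum>r<n. w r * cof r)" using cd_col_expand[OF k] by blast
  show ?thesis unfolding cof
    by (simp add: sum_distrib_left sum_distrib_right mult.assoc sum.swap[of _ S])
qed

lemma cd_zero_col:
  assumes k: "k < n" and z: "\<And>r. r < n \<Longrightarrow> u k r = 0"
  shows "cd n u = 0"
proof -
  have "cd n u = cd n (u(k := (\<lambda>r. \<Sum>i\<in>{}. (0::'a) * u i r)))"
    by (rule cd_cong, auto simp: z)
  also have "\<dots> = 0" by (subst cd_linear[OF k], auto)
  finally show ?thesis .
qed

lemma cd_perm:
  assumes p: "p permutes {0..<n}"
  shows "cd n (\<lambda>j. u (p j)) = signof p * cd n u"
proof -
  let ?A = "mat n n (\<lambda>(j,r). u j r)"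
  have tr: "cd n w = det (mat n n (\<lambda>(j,r). w j r))" for w
  proof -
    have "cd n w = det (transpose_mat (mat n n (\<lambda>(r,j). w j r)))"
      unfolding cd_def by (rule det_transpose[symmetric], auto)
    also have "transpose_mat (mat n n (\<lambda>(r,j). w j r)) = mat n n (\<lambda>(j,r). w j r)"
      by (rule eq_matI, auto)
    finally show ?thesis .
  qed
  have pn: "i < n \<Longrightarrow> p i < n" for i using p by (simp add: permutes_in_image)
  have "cd n (\<lambda>j. u (p j)) = det (mat n n (\<lambda>(i,j). ?A $$ (p i, j)))"
    unfolding tr by (rule arg_cong[where f=det], rule eq_matI, auto simp: pn)
  also have "\<dots> = signof p * det ?A" by (rule det_permute_rows[OF _ p], auto)
  finally show ?thesis unfolding tr .
qed

lemma cd_repeat: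
  assumes ij: "i \<noteq> j" "i < n" "j < n" and e: "\<And>r. r < n \<Longrightarrow> u i r = u j r"
  shows "cd n u = 0"
  unfolding cd_def
  by (rule det_identical_columns[OF _ ij], auto intro!: eq_vecI simp: e ij col_def)

lemma cd_mult:
  assumes v: "\<And>j r. j < n \<Longrightarrow> r < n \<Longrightarrow> v j r = (\<Sum>l<n. C l j * u l r)"
  shows "cd n v = det (mat n n (\<lambda>(l,j). C l j)) * cd n u"
proof -
  have "mat n n (\<lambda>(r,j). v j r) = mat n n (\<lambda>(r,j). u j r) * mat n n (\<lambda>(l,j). C l j)"
    by (rule eq_matI, auto simp: v scalar_prod_def mult.commute intro!: sum.cong)
  then show ?thesis unfolding cd_def
    by (simp add: det_mult[of _ n] mult.commute)
qed

lemma cd_cramer: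
  assumes r: "r < n"
  shows "(\<Sum>i\<le>n. (-1)^i * cd n (\<lambda>j. if j < i then v j else v (Suc j)) * v i r) = 0"
proof -
  let ?A = "mat (Suc n) (Suc n) (\<lambda>(i,j). if i = 0 then v j r else v j (i - 1))"
  have "det ?A = 0"
    by (rule det_identical_rows[of _ "Suc n" 0 "Suc r"], insert r, auto intro!: eq_vecI)
  moreover have "det ?A = (\<Sum>j<Suc n. ?A $$ (0,j) * cofactor ?A 0 j)"
    by (rule laplace_expansion_row, auto)
  moreover have "\<dots> = (\<Sum>i\<le>n. (-1)^i * cd n (\<lambda>j. if j < i then v j else v (Suc j)) * v i r)"
  proof (rule sum.cong)
    show "{..<Suc n} = {..n}" by auto
  next
    fix j assume j: "j \<in> {..n}"
    have "mat_delete ?A 0 j = mat n n (\<lambda>(r,j'). (\<lambda>j'. if j' < j then v j' else v (Suc j')) j' r)"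
      unfolding mat_delete_def by (rule eq_matI, auto)
    then show "?A $$ (0,j) * cofactor ?A 0 j = (-1)^j * cd n (\<lambda>j'. if j' < j then v j' else v (Suc j')) * v j r"
      using j unfolding cofactor_def cd_def by auto
  qed
  ultimately show ?thesis by simp
qed

lemma cd_rot_aux:
  "n - 1 - i = d \<Longrightarrow> i < n \<Longrightarrow> cd n (\<lambda>j. if j < i then u j else if j < n - 1 then u (Suc j) else u i) = (-1)^(n-1-i) * cd n u"
proof (induction d arbitrary: i u)
  case 0
  then have i: "i = n - 1" by auto
  have "cd n (\<lambda>j. if j < i then u j else if j < n - 1 then u (Suc j) else u i) = cd n u"
  proof (rule cd_cong)
    fix j r assume "j < n" "r < n"
    then show "(if j < i then u j else if j < n - 1 then u (Suc j) else u i) r = u j r"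
    proof (cases "j < n - 1")
      case False
      then have "j = n - 1" using \<open>j < n\<close> by linarith
      then show ?thesis using i by simp
    qed (use i in auto)
  qed
  then show ?case using 0(1) by simp
next
  case (Suc d)
  define w where "w = (\<lambda>j. u (Transposition.transpose i (Suc i) j))"
  have i1: "Suc i < n" "d = n - 1 - Suc i" using Suc.prems by auto
  have "cd n w = signof (Transposition.transpose i (Suc i)) * cd n u"
    unfolding w_def by (rule cd_perm, rule permutes_swap_id, insert i1, auto)
  then have w: "cd n w = - cd n u" by (simp add: sign_swap_id)
  have "cd n (\<lambda>j. if j < i then u j else if j < n - 1 then u (Suc j) else u i)
      = cd n (\<lambda>j. if j < Suc i then w j else if j < n - 1 then w (Suc j) else w (Suc i))"
  proof (rule cd_cong)
    fix j r assume j: "j < n" "r < n"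
    show "(if j < i then u j else if j < n - 1 then u (Suc j) else u i) r =
      (if j < Suc i then w j else if j < n - 1 then w (Suc j) else w (Suc i)) r"
    proof (cases "j = i")
      case True
      have "i < n - 1" using i1 by linarith
      then show ?thesis using True by (simp add: w_def transpose_def)
    qed (use i1 j in \<open>auto simp: w_def transpose_def\<close>)
  qed
  also have "\<dots> = (-1)^d * cd n w" using Suc.IH[OF i1(2)[symmetric] i1(1)] i1 by simp
  finally show ?case using w Suc.prems(1) by (simp add: i1(2)[symmetric])
qed

lemma cd_rot:
  "i < n \<Longrightarrow> cd n (\<lambda>j. if j < i then u j else if j < n - 1 then u (Suc j) else u i) = (-1)^(n-1-i) * cd n u"
  by (rule cd_rot_aux[OF refl])

lemma det_block_id:
  fixes C :: "'a::idom mat"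
  assumes C: "C \<in> carrier_mat k k" and n: "a + k \<le> n"
  shows "det (mat n n (\<lambda>(l,j). if a \<le> l \<and> l < a+k \<and> a \<le> j \<and> j < a+k then C $$ (l-a, j-a)
             else if l = j then 1 else 0)) = det C"
proof -
  let ?B = "four_block_mat (four_block_mat (1\<^sub>m a) (0\<^sub>m a k) (0\<^sub>m k a) C) (0\<^sub>m (a+k) (n-a-k)) (0\<^sub>m (n-a-k) (a+k)) (1\<^sub>m (n-a-k))"
  have e: "mat n n (\<lambda>(l,j). if a \<le> l \<and> l < a+k \<and> a \<le> j \<and> j < a+k then C $$ (l-a, j-a)
             else if l = j then 1 else 0) = ?B"
    by (rule eq_matI, insert C n, auto simp: four_block_mat_def Let_def)
  have "det ?B = det (four_block_mat (1\<^sub>m a) (0\<^sub>m a k) (0\<^sub>m k a) C) * det (1\<^sub>m (n-a-k))"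
    by (rule det_four_block_mat_upper_right_zero, insert C, auto)
  also have "det (four_block_mat (1\<^sub>m a) (0\<^sub>m a k) (0\<^sub>m k a) C) = det (1\<^sub>m a) * det C"
    by (rule det_four_block_mat_upper_right_zero, insert C, auto)
  finally show ?thesis unfolding e by simp
qed

lemma cd_block:
  fixes u v :: "nat \<Rightarrow> nat \<Rightarrow> 'a::idom"
  assumes n: "a + k \<le> n"
    and blk: "\<And>j r. j < k \<Longrightarrow> r < n \<Longrightarrow> v (a+j) r = (\<Sum>l<k. C l j * u (a+l) r)"
    and out: "\<And>j r. j < n \<Longrightarrow> (j < a \<or> a+k \<le> j) \<Longrightarrow> r < n \<Longrightarrow> v j r = u j r"
  shows "cd n v = det (mat k k (\<lambda>(l,j). C l j)) * cd n u"
proof -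
  define D where "D = (\<lambda>l j. if a \<le> l \<and> l < a+k \<and> a \<le> j \<and> j < a+k then C (l-a) (j-a)
             else if l = j then 1 else (0::'a))"
  have "cd n v = det (mat n n (\<lambda>(l,j). D l j)) * cd n u"
  proof (rule cd_mult)
    fix j r assume j: "j < n" and r: "r < n"
    show "v j r = (\<Sum>l<n. D l j * u l r)"
    proof (cases "a \<le> j \<and> j < a + k")
      case True
      then obtain j' where j': "j = a + j'" "j' < k" by (metis add_less_imp_less_left le_Suc_ex)
      have "(\<Sum>l<n. D l j * u l r) = (\<Sum>l\<in>{a..<a+k}. C (l-a) j' * u l r)"
        by (rule sum.mono_neutral_cong_right, insert n j', auto simp: D_def)
      also have "\<dots> = (\<Sum>l<k. C l j' * u (a+l) r)"
        by (rule sum.reindex_bij_witness[of _ "\<lambda>l. a + l" "\<lambda>l. l - a"], auto)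
      finally show ?thesis using blk[OF j'(2) r] j' by simp
    next
      case False
      have "(\<Sum>l<n. D l j * u l r) = (\<Sum>l\<in>{j}. D l j * u l r)"
        by (rule sum.mono_neutral_cong_right, insert j False, auto simp: D_def)
      then show ?thesis using False out[OF j _ r] by (auto simp: D_def)
    qed
  qed
  also have "det (mat n n (\<lambda>(l,j). D l j)) = det (mat k k (\<lambda>(l,j). C l j))"
  proof -
    have "mat n n (\<lambda>(l,j). D l j) = mat n n (\<lambda>(l,j). if a \<le> l \<and> l < a+k \<and> a \<le> j \<and> j < a+k then mat k k (\<lambda>(l,j). C l j) $$ (l-a, j-a)
             else if l = j then 1 else 0)"
      by (rule eq_matI, auto simp: D_def)
    then show ?thesis using det_block_id[of "mat k k (\<lambda>(l,j). C l j)" k a n] n by simp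
  qed
  finally show ?thesis .
qed

lemma plucker:
  fixes f gb gb1 u H :: "nat \<Rightarrow> nat \<Rightarrow> 'a::field"
  assumes n: "n = p + b + c" and b: "1 \<le> b" and c: "1 \<le> c"
    and gb: "\<And>j r. j < b \<Longrightarrow> gb j r = (\<Sum>l<b. C l j * u l r)"
    and gb1: "\<And>j r. j < b - 1 \<Longrightarrow> gb1 j r = (\<Sum>l<b. D l j * u l r)"
  shows "cd n (fapp p f (fapp b gb (\<lambda>j. H (c-1-j)))) * cd n (fapp (p+1) f (fapp (b-1) gb1 (\<lambda>j. H (c-j))))
       = cd n (fapp (p+1) f (fapp (b-1) gb1 (\<lambda>j. H (c-1-j)))) * cd n (fapp p f (fapp b gb (\<lambda>j. H (c-j))))
       + cd n (fapp p f (fapp (b-1) gb1 (\<lambda>j. H (c-j)))) * cd n (fapp (p+1) f (fapp b gb (\<lambda>j. H (c-1-j))))"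
proof -
  define E1f where "E1f = fapp p f (fapp b gb (\<lambda>j. H (c-1-j)))"
  define psi where "psi = (\<lambda>w. cd n (E1f(n-1 := w)))"
  define V where "V = (\<lambda>i. if i \<le> p then f i else if i < p+b then gb1 (i-p-1) else H (n-i))"
  define co where "co = (\<lambda>i. (-1::'a)^i * cd n (\<lambda>j. if j < i then V j else V (Suc j)))"
  have n1: "n - 1 < n" "p + b \<le> n - 1" using n c by auto
  have sum0: "(\<Sum>i\<in>{..n}. co i * psi (V i)) = 0"
  proof -
    have "(\<Sum>i\<in>{..n}. co i * psi (V i)) = cd n (E1f(n-1 := (\<lambda>r. \<Sum>i\<in>{..n}. co i * V i r)))"
      unfolding psi_def by (rule cd_linear[symmetric], use n1 in auto)
    also have "\<dots> = 0"
      by (rule cd_zero_col[OF n1(1)], simp, unfold co_def, rule cd_cramer, simp)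
    finally show ?thesis .
  qed
  have psi_span: "psi (\<lambda>r. \<Sum>l<b. d l * u l r) = 0" for d
  proof -
    define U where "U = fapp p f (fapp b u (\<lambda>j. H (c-1-j)))"
    have "psi (\<lambda>r. \<Sum>l<b. d l * u l r) = det (mat b b (\<lambda>(l,j). C l j)) * cd n (U(n-1 := (\<lambda>r. \<Sum>l<b. d l * u l r)))"
      unfolding psi_def
    proof (rule cd_block)
      show "p + b \<le> n" using n by simp
      fix j r assume j: "j < b" "r < n"
      then have "p + j \<noteq> n - 1" using n1 by auto
      then show "(E1f(n - 1 := \<lambda>r. \<Sum>l<b. d l * u l r)) (p + j) r = (\<Sum>l<b. C l j * (U(n - 1 := \<lambda>r. \<Sum>l<b. d l * u l r)) (p + l) r)"
        using j n1 by (auto simp: E1f_def U_def fapp_def gb intro!: sum.cong)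
    next
      fix j r assume "j < n" "j < p \<or> p + b \<le> j" "r < n"
      then show "(E1f(n - 1 := \<lambda>r. \<Sum>l<b. d l * u l r)) j r = (U(n - 1 := \<lambda>r. \<Sum>l<b. d l * u l r)) j r"
        by (auto simp: E1f_def U_def fapp_def)
    qed
    also have "cd n (U(n-1 := (\<lambda>r. \<Sum>l<b. d l * u l r))) = (\<Sum>l\<in>{..<b}. d l * cd n (U(n-1 := u l)))"
      by (rule cd_linear, use n1 in auto)
    also have "\<dots> = 0"
    proof (rule sum.neutral, rule ballI)
      fix l assume l: "l \<in> {..<b}"
      have "cd n (U(n-1 := u l)) = 0"
        by (rule cd_repeat[of "p+l" "n-1"], use l n1 in \<open>auto simp: U_def fapp_def\<close>)
      then show "d l * cd n (U(n-1 := u l)) = 0" by simp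
    qed
    finally show ?thesis by simp
  qed
  have van: "psi (V i) = 0" if i: "i \<le> n" "i \<noteq> p" "i \<noteq> p + b" "i \<noteq> n" for i
  proof (cases "i < p")
    case True
    show ?thesis unfolding psi_def
      by (rule cd_repeat[of i "n-1"], use True n1 in \<open>auto simp: V_def E1f_def fapp_def\<close>)
  next
    case False
    show ?thesis
    proof (cases "i < p + b")
      case True
      then have "i - p - 1 < b - 1" using False i by auto
      then have "V i = (\<lambda>r. \<Sum>l<b. D l (i-p-1) * u l r)" using True False i by (auto simp: V_def gb1)
      then show ?thesis using psi_span by simp
    next
      case F2: False
      have "i - 1 < n - 1" "p + b \<le> i - 1" using F2 i n by auto
      show ?thesis unfolding psi_def
      proof (rule cd_repeat[of "i-1" "n-1"])
        show "i - 1 \<noteq> n - 1" "i - 1 < n" "n - 1 < n" using F2 i n by auto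
        fix r assume "r < n"
        have "c - 1 - (i - 1 - p - b) = n - i" using F2 i n by auto
        then show "(E1f(n - 1 := V i)) (i - 1) r = (E1f(n - 1 := V i)) (n - 1) r"
          using F2 False i n by (auto simp: V_def E1f_def fapp_def)
      qed
    qed
  qed
  have split: "(\<Sum>i\<in>{..n}. co i * psi (V i)) = co p * psi (V p) + co (p+b) * psi (V (p+b)) + co n * psi (V n)"
  proof -
    have "(\<Sum>i\<in>{..n}. co i * psi (V i)) = (\<Sum>i\<in>{p, p+b, n}. co i * psi (V i))"
      by (rule sum.mono_neutral_cong_right, use n van in auto)
    also have "\<dots> = co p * psi (V p) + co (p+b) * psi (V (p+b)) + co n * psi (V n)"
      using n b c by (simp add: algebra_simps)
    finally show ?thesis .
  qed
  define E1 where "E1 = cd n (fapp p f (fapp b gb (\<lambda>j. H (c-1-j))))"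
  define E2 where "E2 = cd n (fapp (p+1) f (fapp (b-1) gb1 (\<lambda>j. H (c-j))))"
  define E3 where "E3 = cd n (fapp (p+1) f (fapp (b-1) gb1 (\<lambda>j. H (c-1-j))))"
  define E4 where "E4 = cd n (fapp p f (fapp b gb (\<lambda>j. H (c-j))))"
  define E5 where "E5 = cd n (fapp p f (fapp (b-1) gb1 (\<lambda>j. H (c-j))))"
  define E6 where "E6 = cd n (fapp (p+1) f (fapp b gb (\<lambda>j. H (c-1-j))))"
  have co_p: "co p = (-1)^p * E5" unfolding co_def E5_def
  proof (rule arg_cong[where f="\<lambda>x. (-1)^p * x"], rule cd_cong)
    fix j r assume j: "j < n" "r < n"
    have "j \<ge> p \<Longrightarrow> \<not> Suc j < p + b \<Longrightarrow> c - (j - p - (b - 1)) = n - Suc j" using n b j by auto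
    then show "(if j < p then V j else V (Suc j)) r = fapp p f (fapp (b - 1) gb1 (\<lambda>j. H (c - j))) j r"
      using b j by (auto simp: V_def fapp_def)
  qed
  have co_pb: "co (p+b) = (-1)^(p+b) * E3" unfolding co_def E3_def
  proof (rule arg_cong[where f="\<lambda>x. (-1)^(p+b) * x"], rule cd_cong)
    fix j r assume j: "j < n" "r < n"
    have "j \<ge> p + b \<Longrightarrow> c - 1 - (j - Suc p - (b - 1)) = n - Suc j" using n b j by auto
    then show "(if j < p + b then V j else V (Suc j)) r = fapp (p+1) f (fapp (b - 1) gb1 (\<lambda>j. H (c - 1 - j))) j r"
      using b j by (auto simp: V_def fapp_def)
  qed
  have co_n: "co n = (-1)^n * E2" unfolding co_def E2_def
  proof (rule arg_cong[where f="\<lambda>x. (-1)^n * x"], rule cd_cong)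
    fix j r assume j: "j < n" "r < n"
    have "j \<ge> p + b \<Longrightarrow> c - (j - Suc p - (b - 1)) = n - j" using n b j by auto
    then show "(if j < n then V j else V (Suc j)) r = fapp (p+1) f (fapp (b - 1) gb1 (\<lambda>j. H (c - j))) j r"
      using b j by (auto simp: V_def fapp_def)
  qed
  have ps_n: "psi (V n) = E1" unfolding psi_def E1_def E1f_def
  proof (rule cd_cong)
    fix j r assume j: "j < n" "r < n"
    have "j = n - 1 \<Longrightarrow> c - 1 - (j - p - b) = 0" using n j by auto
    then show "((fapp p f (fapp b gb (\<lambda>j. H (c - 1 - j))))(n - 1 := V n)) j r = fapp p f (fapp b gb (\<lambda>j. H (c - 1 - j))) j r"
      using n b c j by (auto simp: V_def fapp_def)
  qed
  have ps_p: "psi (V p) = (-1)^(n-1-p) * E6"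
  proof -
    have "psi (V p) = cd n (\<lambda>j. if j < p then fapp (p+1) f (fapp b gb (\<lambda>j. H (c-1-j))) j
        else if j < n - 1 then fapp (p+1) f (fapp b gb (\<lambda>j. H (c-1-j))) (Suc j) else fapp (p+1) f (fapp b gb (\<lambda>j. H (c-1-j))) p)"
      unfolding psi_def E1f_def
    proof (rule cd_cong)
      fix j r assume j: "j < n" "r < n"
      have "p + b \<le> j \<Longrightarrow> j < n - 1 \<Longrightarrow> c - 1 - (j - p - b) = c - 1 - (Suc j - Suc p - b)" by auto
      then show "((fapp p f (fapp b gb (\<lambda>j. H (c - 1 - j))))(n - 1 := V p)) j r = (if j < p then fapp (p+1) f (fapp b gb (\<lambda>j. H (c-1-j))) j
        else if j < n - 1 then fapp (p+1) f (fapp b gb (\<lambda>j. H (c-1-j))) (Suc j) else fapp (p+1) f (fapp b gb (\<lambda>j. H (c-1-j))) p) r"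
        using n b c j by (auto simp: V_def fapp_def)
    qed
    also have "\<dots> = (-1)^(n-1-p) * E6" unfolding E6_def by (rule cd_rot, use n c in auto)
    finally show ?thesis .
  qed
  have ps_pb: "psi (V (p+b)) = (-1)^(n-1-(p+b)) * E4"
  proof -
    have "psi (V (p+b)) = cd n (\<lambda>j. if j < p+b then fapp p f (fapp b gb (\<lambda>j. H (c-j))) j
        else if j < n - 1 then fapp p f (fapp b gb (\<lambda>j. H (c-j))) (Suc j) else fapp p f (fapp b gb (\<lambda>j. H (c-j))) (p+b))"
      unfolding psi_def E1f_def
    proof (rule cd_cong)
      fix j r assume j: "j < n" "r < n"
      have "p + b \<le> j \<Longrightarrow> j < n - 1 \<Longrightarrow> c - 1 - (j - p - b) = c - (Suc j - p - b)" by auto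
      then show "((fapp p f (fapp b gb (\<lambda>j. H (c - 1 - j))))(n - 1 := V (p+b))) j r = (if j < p+b then fapp p f (fapp b gb (\<lambda>j. H (c-j))) j
        else if j < n - 1 then fapp p f (fapp b gb (\<lambda>j. H (c-j))) (Suc j) else fapp p f (fapp b gb (\<lambda>j. H (c-j))) (p+b)) r"
        using n b c j by (auto simp: V_def fapp_def)
    qed
    also have "\<dots> = (-1)^(n-1-(p+b)) * E4" unfolding E4_def by (rule cd_rot, use n c in auto)
    finally show ?thesis .
  qed
  define t where "t = (-1::'a)^(n-1)"
  have t1: "(-1::'a)^p * (-1)^(n-1-p) = t" unfolding t_def power_add[symmetric] using n c by (simp add: add.assoc)
  have t2: "(-1::'a)^(p+b) * (-1)^(n-1-(p+b)) = t" unfolding t_def power_add[symmetric] using n c by (simp)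
  have t3: "(-1::'a)^n = - t" unfolding t_def using n c by (cases n, auto)
  have t0: "t \<noteq> 0" unfolding t_def by simp
  have a1: "co p * psi (V p) = t * (E5 * E6)"
  proof -
    have "co p * psi (V p) = ((-1::'a)^p * (-1)^(n-1-p)) * (E5 * E6)"
      unfolding co_p ps_p by (simp add: algebra_simps)
    then show ?thesis by (simp only: t1)
  qed
  have a2: "co (p+b) * psi (V (p+b)) = t * (E3 * E4)"
  proof -
    have "co (p+b) * psi (V (p+b)) = ((-1::'a)^(p+b) * (-1)^(n-1-(p+b))) * (E3 * E4)"
      unfolding co_pb ps_pb by (simp only: algebra_simps)
    then show ?thesis by (simp only: t2)
  qed
  have a3: "co n * psi (V n) = - t * (E1 * E2)"
    unfolding co_n ps_n t3 by (simp add: algebra_simps)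
  have "t * (E5 * E6 + E3 * E4 - E1 * E2) = 0"
    using sum0 unfolding split a1 a2 a3 by (simp add: algebra_simps)
  then have "E1 * E2 = E3 * E4 + E5 * E6" using t0 by (simp add: add.commute)
  then show ?thesis unfolding E1_def E2_def E3_def E4_def E5_def E6_def .
qed

lemma sl_lessThan: "r < m \<Longrightarrow> sorted_list_of_set {..<m} ! r = r"
  by (simp add: lessThan_atLeast0)


lemma wedge_top: "wedge m Y m I = (if I = {..<m} then cd m Y else 0)"
proof (cases "I \<subseteq> {..<m} \<and> card I = m")
  case True
  then have I: "I = {..<m}" by (metis card_lessThan card_subset_eq finite_lessThan)
  show ?thesis unfolding wedge_def I
    by (simp, simp only: cd_def[symmetric], rule cd_cong, simp add: sl_lessThan)
next
  case False
  then have "I \<noteq> {..<m}" by auto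
  then show ?thesis using False unfolding wedge_def by auto
qed

lemma pair_top_cd: "pair_top m om u = om * cd m u"
  unfolding pair_top_def wedge_top by simp

lemma wedge_mult:
  assumes X: "\<And>j i. j < k \<Longrightarrow> X j i = (\<Sum>l<k. C l j * u l i)"
  shows "wedge m X k I = det (mat k k (\<lambda>(l,j). C l j)) * wedge m u k I"
proof (cases "I \<subseteq> {..<m} \<and> card I = k")
  case True
  have "cd k (\<lambda>j r. X j (sorted_list_of_set I ! r)) = det (mat k k (\<lambda>(l,j). C l j)) * cd k (\<lambda>j r. u j (sorted_list_of_set I ! r))"
    by (rule cd_mult, simp add: X)
  then show ?thesis using True unfolding wedge_def cd_def by simp
next
  case False
  then have "wedge m X k I = 0" "wedge m u k I = 0" unfolding wedge_def by auto
  then show ?thesis by simp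
qed

lemma lcomb_coeffs:
  assumes "\<And>j. j < k \<Longrightarrow> p j \<in> {lcomb c u d | c. True}"
  shows "\<exists>C. \<forall>j<k. \<forall>i. p j i = (\<Sum>l<d. C l j * u l i)"
proof -
  have "\<forall>j. \<exists>c. j < k \<longrightarrow> p j = lcomb c u d" using assms by blast
  then obtain cc where cc: "\<And>j. j < k \<Longrightarrow> p j = lcomb (cc j) u d" by metis
  show ?thesis
    by (rule exI[of _ "\<lambda>l j. cc j l"], use cc in \<open>auto simp: lcomb_def\<close>)
qed

lemma flag_mono:
  assumes F: "decorated_flag m om Fs fr" and i: "1 \<le> i" "i \<le> j" "j < m"
  shows "Fs i \<subseteq> Fs j"
  using i
proof (induction j)
  case 0 then show ?case by simp
next
  case (Suc j)
  show ?case
  proof (cases "i = Suc j")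
    case False
    then have "Fs i \<subseteq> Fs j" using Suc by auto
    moreover have "Fs j \<subseteq> Fs (j + 1)" using F Suc False unfolding decorated_flag_def by auto
    ultimately show ?thesis by simp
  qed simp
qed

lemma Xframe_in_G:
  assumes G: "decorated_flag m om Gs gfr"
    and fb: "\<forall>k\<in>{1..m}. fb k \<in> vecs m \<and> (k < m \<longrightarrow> fb k \<in> Fs k) \<and> (1 < k \<longrightarrow> fb k \<in> Gs (m + 1 - k))
               \<and> wedge m (\<lambda>j. fb (j + 1)) k = wedge m (ffr k) k"
    and hb: "\<forall>k\<in>{1..m}. hb k \<in> vecs m \<and> (1 < k \<longrightarrow> hb k \<in> Gs (m + 1 - k)) \<and> (k < m \<longrightarrow> hb k \<in> Hs k)
               \<and> wedge m (\<lambda>j. hb (k - j)) k = wedge m (hfr k) k"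
    and sum: "a + b + c = m - s" and s: "1 \<le> s" "s < m" and j: "j < m - s"
  shows "Xframe gfr fb hb s a b c j \<in> Gs (m - s)"
proof -
  have mono: "Gs i \<subseteq> Gs (m - s)" if "1 \<le> i" "i \<le> m - s" for i
    by (rule flag_mono[OF G], use that s in auto)
  consider (A) "j < a" | (B) "a \<le> j" "j < a + b" | (C) "a + b \<le> j" using j by linarith
  then show ?thesis
  proof cases
    case A
    define k where "k = s + 1 + j"
    have k: "k \<in> {1..m}" "1 < k" using A sum s j unfolding k_def by auto
    then have "fb k \<in> Gs (m + 1 - k)" using fb by blast
    moreover have "Gs (m + 1 - k) \<subseteq> Gs (m - s)" by (rule mono, use k A sum s j k_def in auto)
    ultimately show ?thesis using A unfolding Xframe_def fapp_def k_def by auto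
  next
    case B
    have "gfr b (j - a) \<in> Gs b" using G B sum s unfolding decorated_flag_def by auto
    moreover have "Gs b \<subseteq> Gs (m - s)" by (rule mono, use B sum in auto)
    ultimately show ?thesis using B unfolding Xframe_def fapp_def by auto
  next
    case C
    define k where "k = s + c - (j - a - b)"
    have k: "k \<in> {1..m}" "1 < k" "s + 1 \<le> k" using C sum s j unfolding k_def by auto
    then have "hb k \<in> Gs (m + 1 - k)" using hb by blast
    moreover have "Gs (m + 1 - k) \<subseteq> Gs (m - s)" by (rule mono, use k in auto)
    ultimately show ?thesis using C unfolding Xframe_def fapp_def k_def by auto
  qed
qed

lemma frame_change:
  assumes W: "subspace_dim m W k"
    and p: "\<And>j. j < k \<Longrightarrow> p j \<in> W" and q: "\<And>j. j < k \<Longrightarrow> q j \<in> W"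
    and wpq: "wedge m p k = wedge m q k" and wp: "wedge m p k \<noteq> (\<lambda>_. 0)"
    and n: "k \<le> n"
  shows "cd n (fapp k p Y) = cd n (fapp k (q::nat \<Rightarrow> nat \<Rightarrow> 'a::field) Y)"
proof -
  obtain u where Wu: "W = {lcomb c u k | c. True}" using W unfolding subspace_dim_def by blast
  obtain A where A: "\<forall>j<k. \<forall>i. p j i = (\<Sum>l<k. A l j * u l i)" using lcomb_coeffs[of k p u k] p Wu by blast
  obtain B where B: "\<forall>j<k. \<forall>i. q j i = (\<Sum>l<k. B l j * u l i)" using lcomb_coeffs[of k q u k] q Wu by blast
  have wA: "wedge m p k I = det (mat k k (\<lambda>(l,j). A l j)) * wedge m u k I" for I by (rule wedge_mult, use A in auto)
  have wB: "wedge m q k I = det (mat k k (\<lambda>(l,j). B l j)) * wedge m u k I" for I by (rule wedge_mult, use B in auto)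
  obtain I where I: "wedge m p k I \<noteq> 0" using wp by auto
  have "det (mat k k (\<lambda>(l,j). A l j)) = det (mat k k (\<lambda>(l,j). B l j))"
    using wA[of I] wB[of I] wpq I by (metis mult_cancel_right mult_zero_right)
  moreover have "cd n (fapp k p Y) = det (mat k k (\<lambda>(l,j). A l j)) * cd n (fapp k u Y)"
    by (rule cd_block[where a=0], use n A in \<open>auto simp: fapp_def\<close>)
  moreover have "cd n (fapp k q Y) = det (mat k k (\<lambda>(l,j). B l j)) * cd n (fapp k u Y)"
    by (rule cd_block[where a=0], use n B in \<open>auto simp: fapp_def\<close>)
  ultimately show ?thesis by simp
qed

lemma Delta_eq:
  fixes om :: "'a::field"
  assumes F: "decorated_flag m om Fs ffr"
    and G: "decorated_flag m om Gs gfr"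
    and fb: "\<forall>k\<in>{1..m}. fb k \<in> vecs m \<and> (k < m \<longrightarrow> fb k \<in> Fs k) \<and> (1 < k \<longrightarrow> fb k \<in> Gs (m + 1 - k))
               \<and> wedge m (\<lambda>j. fb (j + 1)) k = wedge m (ffr k) k"
    and hb: "\<forall>k\<in>{1..m}. hb k \<in> vecs m \<and> (1 < k \<longrightarrow> hb k \<in> Gs (m + 1 - k)) \<and> (k < m \<longrightarrow> hb k \<in> Hs k)
               \<and> wedge m (\<lambda>j. hb (k - j)) k = wedge m (hfr k) k"
    and sum: "a + b + c = m - s" and s: "s < m"
  shows "Delta m om ffr gfr hfr fb hb s a b c =
    om * cd m (fapp (s+a) (\<lambda>j. fb (j+1)) (fapp b (gfr b) (\<lambda>j. hb (s+c-j)))) * pair_top m om (fapp (m-s) (gfr (m-s)) (hfr s))"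
proof -
  define X where "X = Xframe gfr fb hb s a b c"
  define T where "T = cd m (fapp (s+a) (\<lambda>j. fb (j+1)) (fapp b (gfr b) (\<lambda>j. hb (s+c-j))))"
  define g where "g = gfr (m - s)"
  have T: "T = cd m (fapp s (\<lambda>j. fb (j+1)) X)" unfolding T_def X_def
    by (rule cd_cong, auto simp: fapp_def Xframe_def)
  have key: "(THE r. wedge m X (m-s) = (\<lambda>I. r * wedge m g (m-s) I)) * pair_top m om (fapp s (ffr s) g) = om * T"
  proof (cases "s = 0")
    case True
    have cg: "om * cd m (gfr m) = 1" using G unfolding decorated_flag_def pair_top_cd by blast
    then have cg0: "cd m g \<noteq> 0" unfolding g_def True by auto
    have th: "(THE r. wedge m X (m-s) = (\<lambda>I. r * wedge m g (m-s) I)) = cd m X / cd m g"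
    proof (rule the_equality)
      show "wedge m X (m-s) = (\<lambda>I. cd m X / cd m g * wedge m g (m-s) I)"
        using cg0 by (auto simp: fun_eq_iff True wedge_top)
    next
      fix r assume "wedge m X (m-s) = (\<lambda>I. r * wedge m g (m-s) I)"
      then have "wedge m X m {..<m} = r * wedge m g m {..<m}" unfolding True by (simp add: fun_eq_iff)
      then have "cd m X = r * cd m g" unfolding wedge_top by simp
      then show "r = cd m X / cd m g" using cg0 by (simp add: field_simps)
    qed
    have p1: "pair_top m om (fapp s (ffr s) g) = om * cd m g"
    proof -
      have "cd m (fapp s (ffr s) g) = cd m g" unfolding True by (rule cd_cong, simp add: fapp_def)
      then show ?thesis unfolding pair_top_cd by simp
    qed
    have "T = cd m X" unfolding T_def X_def True by (rule cd_cong, auto simp: fapp_def Xframe_def)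
    then show ?thesis unfolding th p1 using cg0 by simp
  next
    case False
    define n where "n = m - s"
    have n: "n \<in> {1..<m}" using False s unfolding n_def by auto
    obtain u where Gu: "Gs n = {lcomb c u n | c. True}" using G n unfolding decorated_flag_def subspace_dim_def by blast
    have Xin: "X j \<in> Gs n" if "j < n" for j
      unfolding X_def n_def by (rule Xframe_in_G[OF G fb hb sum], use False s that n_def in auto)
    have gin: "g j \<in> Gs n" if "j < n" for j using G n that unfolding decorated_flag_def g_def n_def by auto
    obtain C1 where C1: "\<forall>j<n. \<forall>i. X j i = (\<Sum>l<n. C1 l j * u l i)" using lcomb_coeffs[of n X u n] Xin Gu by blast
    obtain C0 where C0: "\<forall>j<n. \<forall>i. g j i = (\<Sum>l<n. C0 l j * u l i)" using lcomb_coeffs[of n g u n] gin Gu by blast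
    define d1 where "d1 = det (mat n n (\<lambda>(l,j). C1 l j))"
    define d0 where "d0 = det (mat n n (\<lambda>(l,j). C0 l j))"
    have wX: "wedge m X n I = d1 * wedge m u n I" for I unfolding d1_def by (rule wedge_mult, use C1 in auto)
    have wg: "wedge m g n I = d0 * wedge m u n I" for I unfolding d0_def by (rule wedge_mult, use C0 in auto)
    have "wedge m g n \<noteq> (\<lambda>_. 0)" using G n unfolding decorated_flag_def g_def n_def by auto
    then obtain I0 where I0: "wedge m g n I0 \<noteq> 0" by auto
    then have d0: "d0 \<noteq> 0" and u0: "wedge m u n I0 \<noteq> 0" using wg by auto
    have th: "(THE r. wedge m X (m-s) = (\<lambda>I. r * wedge m g (m-s) I)) = d1 / d0"
    proof (rule the_equality)
      show "wedge m X (m-s) = (\<lambda>I. d1 / d0 * wedge m g (m-s) I)"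
        unfolding n_def[symmetric] using d0 by (auto simp: fun_eq_iff wX wg)
    next
      fix r assume "wedge m X (m-s) = (\<lambda>I. r * wedge m g (m-s) I)"
      then have "wedge m X n I0 = r * wedge m g n I0" unfolding n_def by (simp add: fun_eq_iff)
      then have "d1 * wedge m u n I0 = (r * d0) * wedge m u n I0" unfolding wX wg by simp
      then have "d1 = r * d0" using u0 by simp
      then show "r = d1 / d0" using d0 by (simp add: field_simps)
    qed
    have cg: "cd m (fapp s (ffr s) g) = d0 * cd m (fapp s (ffr s) u)" unfolding d0_def
      by (rule cd_block[where a=s and k=n], use C0 n_def s in \<open>auto simp: fapp_def\<close>)
    have cX: "cd m (fapp s (ffr s) X) = d1 * cd m (fapp s (ffr s) u)" unfolding d1_def
      by (rule cd_block[where a=s and k=n], use C1 n_def s in \<open>auto simp: fapp_def\<close>)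
    have Fs: "subspace_dim m (Fs s) s" using F False s unfolding decorated_flag_def by auto
    have fch: "cd m (fapp s (ffr s) X) = cd m (fapp s (\<lambda>j. fb (j+1)) X)"
    proof (rule frame_change[OF Fs])
      show "ffr s j \<in> Fs s" if "j < s" for j using F False s that unfolding decorated_flag_def by auto
      show "fb (j+1) \<in> Fs s" if "j < s" for j
      proof -
        have "fb (j+1) \<in> Fs (j+1)" using fb that s by auto
        moreover have "Fs (j+1) \<subseteq> Fs s" by (rule flag_mono[OF F], use that s in auto)
        ultimately show ?thesis by auto
      qed
      show "wedge m (ffr s) s = wedge m (\<lambda>j. fb (j + 1)) s" using fb False s by auto
      show "wedge m (ffr s) s \<noteq> (\<lambda>_. 0)" using F False s unfolding decorated_flag_def by auto
    qed (use s in auto)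
    show ?thesis unfolding th pair_top_cd cg T fch[symmetric] cX using d0 by simp
  qed
  show ?thesis unfolding Delta_def X_def[symmetric] g_def[symmetric] key[unfolded T_def] by simp
qed

lemma hcong:
  assumes "\<And>j. j < cc \<Longrightarrow> h1 j = h2 j" and "p + bb + cc = m"
  shows "cd m (fapp p f (fapp bb G h1)) = cd m (fapp p f (fapp bb G h2))"
  by (rule cd_cong, use assms in \<open>auto simp: fapp_def\<close>)

theorem mainTheorem14:
  fixes m :: nat and om :: "'a::field"
    and Fs Gs Hs :: "nat \<Rightarrow> (nat \<Rightarrow> 'a) set"
    and ffr gfr hfr :: "nat \<Rightarrow> nat \<Rightarrow> nat \<Rightarrow> 'a"
    and fb hb :: "nat \<Rightarrow> nat \<Rightarrow> 'a"
    and a b c s :: nat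
  assumes om: "om \<noteq> 0"
    and F: "decorated_flag m om Fs ffr"
    and G: "decorated_flag m om Gs gfr"
    and H: "decorated_flag m om Hs hfr"
    and FG: "transverse m Fs Gs" and GH: "transverse m Gs Hs" and FH: "transverse m Fs Hs"
    and fb: "\<forall>k\<in>{1..m}. fb k \<in> vecs m \<and> (k < m \<longrightarrow> fb k \<in> Fs k) \<and> (1 < k \<longrightarrow> fb k \<in> Gs (m + 1 - k))
               \<and> wedge m (\<lambda>j. fb (j + 1)) k = wedge m (ffr k) k"
    and hb: "\<forall>k\<in>{1..m}. hb k \<in> vecs m \<and> (1 < k \<longrightarrow> hb k \<in> Gs (m + 1 - k)) \<and> (k < m \<longrightarrow> hb k \<in> Hs k)
               \<and> wedge m (\<lambda>j. hb (k - j)) k = wedge m (hfr k) k"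
    and sum: "a + b + c = m - s" and a: "0 < a" and b: "0 < b" and c: "0 < c"
  shows "Delta m om ffr gfr hfr fb hb s a b c * Delta m om ffr gfr hfr fb hb (s + 1) a (b - 1) c
       = Delta m om ffr gfr hfr fb hb s (a + 1) (b - 1) c * Delta m om ffr gfr hfr fb hb (s + 1) (a - 1) b c
       + Delta m om ffr gfr hfr fb hb s a (b - 1) (c + 1) * Delta m om ffr gfr hfr fb hb (s + 1) a b (c - 1)"
proof -
  define f where "f = (\<lambda>j. fb (j+1))"
  define H where "H = (\<lambda>i. hb (s + 1 + i))"
  define Q where "Q = (\<lambda>s. pair_top m om (fapp (m-s) (gfr (m-s)) (hfr s)))"
  define n where "n = m"
  define p where "p = s + a"
  have sm: "s + 1 < m" "b < m" using sum a b c by auto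
  have DD: "\<And>s' a' b' c'. a'+b'+c' = m - s' \<Longrightarrow> s' < m \<Longrightarrow> Delta m om ffr gfr hfr fb hb s' a' b' c'
      = om * cd m (fapp (s'+a') f (fapp b' (gfr b') (\<lambda>j. hb (s'+c'-j)))) * Q s'"
    using Delta_eq[OF F G fb hb] unfolding f_def Q_def by blast
  have pa: "s + 1 + a = p + 1" "s + (a+1) = p + 1" "s + 1 + (a - 1) = p" using a unfolding p_def by auto
  have "Delta m om ffr gfr hfr fb hb s a b c = om * cd n (fapp p f (fapp b (gfr b) (\<lambda>j. H (c-1-j)))) * Q s"
  proof -
    have "cd m (fapp (s+a) f (fapp b (gfr b) (\<lambda>j. hb (s+c-j)))) = cd n (fapp p f (fapp b (gfr b) (\<lambda>j. H (c-1-j))))"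
      unfolding n_def p_def by (rule hcong[where cc="c"], use sum sm in \<open>auto intro!: arg_cong[where f=hb] simp: H_def\<close>)
    then show ?thesis using DD[of a b c s] sum sm by simp
  qed
  moreover have "Delta m om ffr gfr hfr fb hb (s+1) a (b-1) c = om * cd n (fapp (p+1) f (fapp (b-1) (gfr (b-1)) (\<lambda>j. H (c-j)))) * Q (s+1)"
  proof -
    have "cd m (fapp (s+1+a) f (fapp (b-1) (gfr (b-1)) (\<lambda>j. hb (s+1+c-j)))) = cd n (fapp (p+1) f (fapp (b-1) (gfr (b-1)) (\<lambda>j. H (c-j))))"
      unfolding n_def pa by (rule hcong[where cc="c"], use sum sm b in \<open>auto intro!: arg_cong[where f=hb] simp: H_def p_def\<close>)
    then show ?thesis using DD[of a "b-1" c "s+1"] sum sm b by simp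
  qed
  moreover have "Delta m om ffr gfr hfr fb hb s (a+1) (b-1) c = om * cd n (fapp (p+1) f (fapp (b-1) (gfr (b-1)) (\<lambda>j. H (c-1-j)))) * Q s"
  proof -
    have "cd m (fapp (s+(a+1)) f (fapp (b-1) (gfr (b-1)) (\<lambda>j. hb (s+c-j)))) = cd n (fapp (p+1) f (fapp (b-1) (gfr (b-1)) (\<lambda>j. H (c-1-j))))"
      unfolding n_def pa by (rule hcong[where cc="c"], use sum sm b in \<open>auto intro!: arg_cong[where f=hb] simp: H_def p_def\<close>)
    then show ?thesis using DD[of "a+1" "b-1" c s] sum sm b by simp
  qed
  moreover have "Delta m om ffr gfr hfr fb hb (s+1) (a-1) b c = om * cd n (fapp p f (fapp b (gfr b) (\<lambda>j. H (c-j)))) * Q (s+1)"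
  proof -
    have "cd m (fapp (s+1+(a-1)) f (fapp b (gfr b) (\<lambda>j. hb (s+1+c-j)))) = cd n (fapp p f (fapp b (gfr b) (\<lambda>j. H (c-j))))"
      unfolding n_def pa by (rule hcong[where cc="c"], use sum sm a in \<open>auto intro!: arg_cong[where f=hb] simp: H_def p_def\<close>)
    then show ?thesis using DD[of "a-1" b c "s+1"] sum sm a by simp
  qed
  moreover have "Delta m om ffr gfr hfr fb hb s a (b-1) (c+1) = om * cd n (fapp p f (fapp (b-1) (gfr (b-1)) (\<lambda>j. H (c-j)))) * Q s"
  proof -
    have "cd m (fapp (s+a) f (fapp (b-1) (gfr (b-1)) (\<lambda>j. hb (s+(c+1)-j)))) = cd n (fapp p f (fapp (b-1) (gfr (b-1)) (\<lambda>j. H (c-j))))"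
      unfolding n_def p_def by (rule hcong[where cc="c+1"], use sum sm b in \<open>auto intro!: arg_cong[where f=hb] simp: H_def\<close>)
    then show ?thesis using DD[of a "b-1" "c+1" s] sum sm b by simp
  qed
  moreover have "Delta m om ffr gfr hfr fb hb (s+1) a b (c-1) = om * cd n (fapp (p+1) f (fapp b (gfr b) (\<lambda>j. H (c-1-j)))) * Q (s+1)"
  proof -
    have "cd m (fapp (s+1+a) f (fapp b (gfr b) (\<lambda>j. hb (s+1+(c-1)-j)))) = cd n (fapp (p+1) f (fapp b (gfr b) (\<lambda>j. H (c-1-j))))"
      unfolding n_def pa by (rule hcong[where cc="c-1"], use sum sm c in \<open>auto intro!: arg_cong[where f=hb] simp: H_def p_def\<close>)
    then show ?thesis using DD[of a b "c-1" "s+1"] sum sm c by simp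
  qed
  moreover have "cd n (fapp p f (fapp b (gfr b) (\<lambda>j. H (c-1-j)))) * cd n (fapp (p+1) f (fapp (b-1) (gfr (b-1)) (\<lambda>j. H (c-j))))
       = cd n (fapp (p+1) f (fapp (b-1) (gfr (b-1)) (\<lambda>j. H (c-1-j)))) * cd n (fapp p f (fapp b (gfr b) (\<lambda>j. H (c-j))))
       + cd n (fapp p f (fapp (b-1) (gfr (b-1)) (\<lambda>j. H (c-j)))) * cd n (fapp (p+1) f (fapp b (gfr b) (\<lambda>j. H (c-1-j))))"
  proof -
    have bm: "b \<in> {1..<m}" using b sm by auto
    obtain u where Gu: "Gs b = {lcomb c u b | c. True}" using G bm unfolding decorated_flag_def subspace_dim_def by blast
    have gin: "gfr b j \<in> Gs b" if "j < b" for j using G bm that unfolding decorated_flag_def by auto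
    have gin1: "gfr (b-1) j \<in> Gs b" if "j < b - 1" for j
    proof -
      have "gfr (b-1) j \<in> Gs (b-1)" using G bm that unfolding decorated_flag_def by auto
      moreover have "Gs (b-1) \<subseteq> Gs b" by (rule flag_mono[OF G], use that bm in auto)
      ultimately show ?thesis by auto
    qed
    obtain C where C: "\<forall>j<b. \<forall>i. gfr b j i = (\<Sum>l<b. C l j * u l i)" using lcomb_coeffs[of b "gfr b" u b] gin Gu by blast
    obtain D where D: "\<forall>j<b-1. \<forall>i. gfr (b-1) j i = (\<Sum>l<b. D l j * u l i)" using lcomb_coeffs[of "b-1" "gfr (b-1)" u b] gin1 Gu by blast
    show ?thesis by (rule plucker[where C=C and D=D and u=u], use sum sm a b c C D in \<open>auto simp: n_def p_def\<close>)
  qed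
  ultimately show ?thesis by (simp add: algebra_simps)
qed

end
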